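(* Let $f:\mathbb{R}^d\to\mathbb{R}$ be twice differentiable, $\mu$-strongly convex and $\alpha$-smooth ($0<\mu\le\alpha$), and suppose its Hessian is $\alpha$-Lipschitz, i.e. $\|\nabla^2f(u)-\nabla^2f(v)\|_2\le\alpha\|u-v\|$ for all $u,v$. Let $\kappa:=\alpha/\mu$ and $w_*:=\arg\min_w f(w)$. Let $(w_t)$ be generated by gradient descent with Polyak's momentum on $f$ with step size $\eta=1/\alpha$ and momentum parameter $\beta=(1-\tfrac{1}{2\sqrt\kappa})^2$, from initial points satisfying $$\left\|\begin{bmatrix}w_0-w_*\\ w_{-1}-w_*\end{bmatrix}\right\|\le\frac{1}{683\,\kappa^{3/2}}.$$ Then for every $t\ge0$, $$\left\|\begin{bmatrix}w_{t+1}-w_*\\ w_t-w_*\end{bmatrix}\right\|\le\Big(1-\frac{1}{4\sqrt\kappa}\Big)^{t+1}8\sqrt\kappa\left\|\begin{bmatrix}w_0-w_*\\ w_{-1}-w_*\end{bmatrix}\right\|.$$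
   Context: Gradient descent with Polyak's momentum (heavy ball): $w_{t+1}=w_t-\eta\nabla f(w_t)+\beta(w_t-w_{t-1})$ for $t\ge0$, given $w_0$ and $w_{-1}$ (in the algorithm $w_{-1}=w_0$). $\|\cdot\|_2$ is the spectral norm. *)

theory Defs
  imports "HOL-Analysis.Analysis"
begin

definition strongly_convex :: "real \<Rightarrow> ('a::real_normed_vector \<Rightarrow> real) \<Rightarrow> bool" where
  "strongly_convex \<mu> f \<longleftrightarrow>
     (\<forall>x y. \<forall>l::real. 0 \<le> l \<and> l \<le> 1 \<longrightarrow>
        f (l *\<^sub>R x + (1 - l) *\<^sub>R y)
          \<le> l * f x + (1 - l) * f y - \<mu> / 2 * l * (1 - l) * (norm (x - y))\<^sup>2)"

definition stack_norm :: "'a::real_normed_vector \<Rightarrow> 'a \<Rightarrow> real" where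
  "stack_norm a b = sqrt ((norm a)\<^sup>2 + (norm b)\<^sup>2)"

end

theory Submission
  imports Defs
begin


lemma eps_le:
  fixes X Y Z :: real
  assumes "\<And>t. 0 < t \<Longrightarrow> X \<le> Y + t * Z"
  shows "X \<le> Y"
proof (rule ccontr)
  assume "\<not> X \<le> Y"
  hence xy: "X > Y" by simp
  show False
  proof (cases "Z \<le> 0")
    case True
    have "X \<le> Y + 1 * Z" using assms[of 1] by simp
    thus False using True xy by simp
  next
    case False
    define t where "t = (X - Y) / (2 * Z)"
    have "t > 0" using False xy by (simp add: t_def)
    hence "X \<le> Y + t * Z" using assms by simp
    also have "t * Z = (X - Y)/2" using False by (simp add: t_def field_simps)
    finally have "X \<le> Y + (X - Y) / 2" .
    thus False using xy by (simp add: field_simps)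
  qed
qed

lemma mvt_bound:
  fixes \<phi> \<phi>' :: "real \<Rightarrow> real"
  assumes t: "0 < t"
    and d: "\<And>s. 0 \<le> s \<Longrightarrow> s \<le> t \<Longrightarrow> (\<phi> has_real_derivative \<phi>' s) (at s)"
    and b: "\<And>s. 0 \<le> s \<Longrightarrow> s \<le> t \<Longrightarrow> \<bar>\<phi>' s\<bar> \<le> B"
  shows "\<bar>\<phi> t - \<phi> 0\<bar> \<le> B * t"
proof -
  obtain z where z: "0 < z" "z < t" "\<phi> t - \<phi> 0 = (t - 0) * \<phi>' z"
    using MVT2[of 0 t \<phi> \<phi>'] t d by auto
  have "\<bar>\<phi> t - \<phi> 0\<bar> = t * \<bar>\<phi>' z\<bar>" using z t by (simp add: abs_mult)
  also have "\<dots> \<le> t * B" using b[of z] z t by (intro mult_left_mono) auto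
  finally show ?thesis by (simp add: mult.commute)
qed

lemma line_deriv:
  fixes f :: "'a::real_inner \<Rightarrow> real"
  assumes grad: "\<And>x. (f has_derivative (\<lambda>h. grad x \<bullet> h)) (at x)"
  shows "((\<lambda>s. f (p + s *\<^sub>R v)) has_real_derivative (grad (p + s *\<^sub>R v) \<bullet> v)) (at s)"
proof -
  have g: "((\<lambda>s. p + s *\<^sub>R v) has_derivative (\<lambda>h. h *\<^sub>R v)) (at s)"
    by (auto intro!: derivative_eq_intros)
  have "((f \<circ> (\<lambda>s. p + s *\<^sub>R v)) has_derivative ((\<lambda>h. grad (p + s *\<^sub>R v) \<bullet> h) \<circ> (\<lambda>h. h *\<^sub>R v))) (at s)"
    by (rule diff_chain_at[OF g grad])
  moreover have "(\<lambda>h. grad (p + s *\<^sub>R v) \<bullet> h) \<circ> (\<lambda>h. h *\<^sub>R v) = (*) (grad (p + s *\<^sub>R v) \<bullet> v)"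
    by (auto simp: fun_eq_iff)
  ultimately show ?thesis
    by (simp add: has_field_derivative_def o_def)
qed

lemma lin_bound:
  fixes grad :: "real^'d \<Rightarrow> real^'d" and hess :: "real^'d \<Rightarrow> real^'d^'d"
  assumes hess: "\<And>x. (grad has_derivative (\<lambda>h. hess x *v h)) (at x)"
    and hess_lip: "\<And>u v. onorm (\<lambda>h. (hess u - hess v) *v h) \<le> \<alpha> * norm (u - v)"
    and a0: "0 \<le> \<alpha>"
  shows "norm (grad b - grad x0 - hess x0 *v (b - x0)) \<le> \<alpha> * (norm (b - x0))\<^sup>2"
proof -
  let ?S = "cball x0 (norm (b - x0))"
  have "norm (grad b - grad x0 - hess x0 *v (b - x0)) \<le> norm (b - x0) * (\<alpha> * norm (b - x0))"
  proof (rule differentiable_bound_linearization[where S="?S" and f'="\<lambda>x h. hess x *v h"])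
    fix t :: real assume "t \<in> {0..1}"
    thus "x0 + t *\<^sub>R (b - x0) \<in> ?S" by (auto simp: dist_norm abs_mult intro!: mult_left_le_one_le)
  next
    fix x assume "x \<in> ?S"
    show "(grad has_derivative (\<lambda>h. hess x *v h)) (at x within ?S)"
      using hess has_derivative_at_withinI by blast
  next
    fix x assume x: "x \<in> ?S"
    have e: "(\<lambda>h. hess x *v h) - (\<lambda>h. hess x0 *v h) = (\<lambda>h. (hess x - hess x0) *v h)"
      by (auto simp: fun_eq_iff matrix_vector_mult_diff_rdistrib)
    have "onorm (\<lambda>h. (hess x - hess x0) *v h) \<le> \<alpha> * norm (x - x0)" by (rule hess_lip)
    also have "\<dots> \<le> \<alpha> * norm (b - x0)" using x a0 by (intro mult_left_mono) (auto simp: dist_norm norm_minus_commute)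
    finally show "onorm ((\<lambda>h. hess x *v h) - (\<lambda>h. hess x0 *v h)) \<le> \<alpha> * norm (b - x0)" using e by simp
  qed auto
  thus ?thesis by (simp add: power2_eq_square mult_ac)
qed



lemma hlip_vec:
  fixes hess :: "real^'d \<Rightarrow> real^'d^'d"
  assumes hess_lip: "\<And>u v. onorm (\<lambda>h. (hess u - hess v) *v h) \<le> \<alpha> * norm (u - v)"
  shows "norm ((hess q - hess p) *v v) \<le> \<alpha> * norm (q - p) * norm v"
proof -
  have "norm ((hess q - hess p) *v v) \<le> onorm (\<lambda>h. (hess q - hess p) *v h) * norm v"
    by (rule onorm) simp
  also have "\<dots> \<le> \<alpha> * norm (q - p) * norm v"
    by (intro mult_right_mono hess_lip) auto
  finally show ?thesis .
qed

lemma mixed: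
  fixes f :: "real^'d \<Rightarrow> real" and grad :: "real^'d \<Rightarrow> real^'d" and hess :: "real^'d \<Rightarrow> real^'d^'d"
  assumes grad: "\<And>x. (f has_derivative (\<lambda>h. grad x \<bullet> h)) (at x)"
    and hess: "\<And>x. (grad has_derivative (\<lambda>h. hess x *v h)) (at x)"
    and hess_lip: "\<And>u v. onorm (\<lambda>h. (hess u - hess v) *v h) \<le> \<alpha> * norm (u - v)"
    and a0: "0 \<le> \<alpha>" and t: "0 < t"
  shows "\<bar>f (p + t *\<^sub>R y + t *\<^sub>R x) - f (p + t *\<^sub>R x) - f (p + t *\<^sub>R y) + f p - t\<^sup>2 * (x \<bullet> (hess p *v y))\<bar>
         \<le> \<alpha> * t^3 * (norm x * norm y * (norm x + norm y))"
proof -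
  define c where "c = t * (x \<bullet> (hess p *v y))"
  define \<phi> where "\<phi> s = f ((p + t *\<^sub>R y) + s *\<^sub>R x) - f (p + s *\<^sub>R x) - s * c" for s
  define \<phi>' where "\<phi>' s = grad ((p + t *\<^sub>R y) + s *\<^sub>R x) \<bullet> x - grad (p + s *\<^sub>R x) \<bullet> x - c" for s
  define B where "B = \<alpha> * t\<^sup>2 * (norm x * norm y * (norm x + norm y))"
  have "\<bar>\<phi> t - \<phi> 0\<bar> \<le> B * t"
  proof (rule mvt_bound[OF t])
    fix s :: real
    have d1: "((\<lambda>s. f ((p + t *\<^sub>R y) + s *\<^sub>R x)) has_real_derivative grad ((p + t *\<^sub>R y) + s *\<^sub>R x) \<bullet> x) (at s)"
      by (rule line_deriv[OF grad])
    have d2: "((\<lambda>s. f (p + s *\<^sub>R x)) has_real_derivative grad (p + s *\<^sub>R x) \<bullet> x) (at s)"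
      by (rule line_deriv[OF grad])
    show "(\<phi> has_real_derivative \<phi>' s) (at s)"
      unfolding \<phi>_def \<phi>'_def
      by (intro DERIV_diff d1 d2) (auto intro!: derivative_eq_intros)
  next
    fix s :: real assume s: "0 \<le> s" "s \<le> t"
    define q where "q = p + s *\<^sub>R x"
    have eq: "(p + t *\<^sub>R y) + s *\<^sub>R x = q + t *\<^sub>R y" by (simp add: q_def algebra_simps)
    have split: "grad (q + t *\<^sub>R y) - grad q - t *\<^sub>R (hess p *v y)
      = (grad (q + t *\<^sub>R y) - grad q - hess q *v ((q + t *\<^sub>R y) - q)) + (hess q - hess p) *v (t *\<^sub>R y)"
      by (simp add: matrix_vector_mult_diff_rdistrib matrix_vector_mult_scaleR algebra_simps)
    have n1: "norm (grad (q + t *\<^sub>R y) - grad q - hess q *v ((q + t *\<^sub>R y) - q)) \<le> \<alpha> * (t * norm y)\<^sup>2"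
      using lin_bound[OF hess hess_lip a0, of "q + t *\<^sub>R y" q] t by simp
    have n2: "norm ((hess q - hess p) *v (t *\<^sub>R y)) \<le> \<alpha> * (s * norm x) * (t * norm y)"
      using hlip_vec[OF hess_lip, of q p "t *\<^sub>R y"] s t by (simp add: q_def)
    have n3: "\<alpha> * (s * norm x) * (t * norm y) \<le> \<alpha> * (t * norm x) * (t * norm y)"
      using s a0 by (intro mult_right_mono mult_left_mono) auto
    have N: "norm (grad (q + t *\<^sub>R y) - grad q - t *\<^sub>R (hess p *v y)) \<le> \<alpha> * t\<^sup>2 * (norm y * (norm x + norm y))"
    proof -
      have "norm (grad (q + t *\<^sub>R y) - grad q - t *\<^sub>R (hess p *v y)) \<le> \<alpha> * (t * norm y)\<^sup>2 + \<alpha> * (t * norm x) * (t * norm y)"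
        unfolding split using n1 n2 n3 norm_triangle_ineq[of "grad (q + t *\<^sub>R y) - grad q - hess q *v ((q + t *\<^sub>R y) - q)" "(hess q - hess p) *v (t *\<^sub>R y)"]
        by linarith
      also have "\<dots> = \<alpha> * t\<^sup>2 * (norm y * (norm x + norm y))" by (simp add: power2_eq_square algebra_simps)
      finally show ?thesis .
    qed
    have phi_eq: "\<phi>' s = (grad (q + t *\<^sub>R y) - grad q - t *\<^sub>R (hess p *v y)) \<bullet> x"
      unfolding \<phi>'_def eq c_def q_def by (simp add: inner_diff_left inner_diff_right inner_commute)
    have "\<bar>\<phi>' s\<bar> \<le> norm (grad (q + t *\<^sub>R y) - grad q - t *\<^sub>R (hess p *v y)) * norm x"
      unfolding phi_eq by (rule Cauchy_Schwarz_ineq2)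
    also have "\<dots> \<le> \<alpha> * t\<^sup>2 * (norm y * (norm x + norm y)) * norm x"
      by (intro mult_right_mono N) auto
    also have "\<dots> = B" by (simp add: B_def algebra_simps)
    finally show "\<bar>\<phi>' s\<bar> \<le> B" .
  qed
  moreover have "\<phi> t - \<phi> 0 = f (p + t *\<^sub>R y + t *\<^sub>R x) - f (p + t *\<^sub>R x) - f (p + t *\<^sub>R y) + f p - t\<^sup>2 * (x \<bullet> (hess p *v y))"
    by (simp add: \<phi>_def c_def power2_eq_square algebra_simps)
  moreover have "B * t = \<alpha> * t^3 * (norm x * norm y * (norm x + norm y))"
    by (simp add: B_def power2_eq_square power3_eq_cube algebra_simps)
  ultimately show ?thesis by simp
qed

lemma hess_sym:
  fixes f :: "real^'d \<Rightarrow> real" and grad :: "real^'d \<Rightarrow> real^'d" and hess :: "real^'d \<Rightarrow> real^'d^'d"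
  assumes grad: "\<And>x. (f has_derivative (\<lambda>h. grad x \<bullet> h)) (at x)"
    and hess: "\<And>x. (grad has_derivative (\<lambda>h. hess x *v h)) (at x)"
    and hess_lip: "\<And>u v. onorm (\<lambda>h. (hess u - hess v) *v h) \<le> \<alpha> * norm (u - v)"
    and a0: "0 \<le> \<alpha>"
  shows "x \<bullet> (hess p *v y) = y \<bullet> (hess p *v x)"
proof -
  let ?K = "norm x * norm y * (norm x + norm y)"
  have "\<bar>x \<bullet> (hess p *v y) - y \<bullet> (hess p *v x)\<bar> \<le> 0"
  proof (rule eps_le)
    fix t :: real assume t: "0 < t"
    note m1 = mixed[OF grad hess hess_lip a0 t, of p y x]
    note m2 = mixed[OF grad hess hess_lip a0 t, of p x y]
    have e: "p + t *\<^sub>R x + t *\<^sub>R y = p + t *\<^sub>R y + t *\<^sub>R x" by (simp add: algebra_simps)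
    have K: "norm y * norm x * (norm y + norm x) = ?K" by (simp add: algebra_simps)
    let ?E1 = "f (p + t *\<^sub>R y + t *\<^sub>R x) - f (p + t *\<^sub>R x) - f (p + t *\<^sub>R y) + f p - t\<^sup>2 * (x \<bullet> (hess p *v y))"
    let ?E2 = "f (p + t *\<^sub>R y + t *\<^sub>R x) - f (p + t *\<^sub>R y) - f (p + t *\<^sub>R x) + f p - t\<^sup>2 * (y \<bullet> (hess p *v x))"
    have "t\<^sup>2 * \<bar>x \<bullet> (hess p *v y) - y \<bullet> (hess p *v x)\<bar> = \<bar>t\<^sup>2 * (x \<bullet> (hess p *v y) - y \<bullet> (hess p *v x))\<bar>"
      by (simp add: abs_mult)
    also have "\<dots> = \<bar>?E2 - ?E1\<bar>"
      by (rule arg_cong[where f=abs]) (simp add: algebra_simps)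
    also have "\<dots> \<le> \<bar>?E2\<bar> + \<bar>?E1\<bar>" by (rule abs_triangle_ineq4)
    also have "\<dots> \<le> 2 * (\<alpha> * t^3 * ?K)"
      using m1 m2 unfolding e K by linarith
    finally have "t\<^sup>2 * \<bar>x \<bullet> (hess p *v y) - y \<bullet> (hess p *v x)\<bar> \<le> 2 * (\<alpha> * t^3 * ?K)" .
    hence "t\<^sup>2 * \<bar>x \<bullet> (hess p *v y) - y \<bullet> (hess p *v x)\<bar> \<le> t\<^sup>2 * (t * (2 * \<alpha> * ?K))"
      by (simp add: power2_eq_square power3_eq_cube mult_ac)
    hence "\<bar>x \<bullet> (hess p *v y) - y \<bullet> (hess p *v x)\<bar> \<le> t * (2 * \<alpha> * ?K)"
      using t by (simp add: mult_le_cancel_left)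
    thus "\<bar>x \<bullet> (hess p *v y) - y \<bullet> (hess p *v x)\<bar> \<le> 0 + t * (2 * \<alpha> * ?K)" by simp
  qed
  thus ?thesis by simp
qed



lemma quad_upper:
  fixes f :: "real^'d \<Rightarrow> real" and grad :: "real^'d \<Rightarrow> real^'d" and hess :: "real^'d \<Rightarrow> real^'d^'d"
  assumes grad: "\<And>x. (f has_derivative (\<lambda>h. grad x \<bullet> h)) (at x)"
    and hess: "\<And>x. (grad has_derivative (\<lambda>h. hess x *v h)) (at x)"
    and hess_lip: "\<And>u v. onorm (\<lambda>h. (hess u - hess v) *v h) \<le> \<alpha> * norm (u - v)"
    and a0: "0 \<le> \<alpha>" and t: "0 < t" and g0: "grad p = 0"
  shows "f (p + t *\<^sub>R y) - f p \<le> t\<^sup>2 / 2 * (y \<bullet> (hess p *v y)) + \<alpha> * t^3 * norm y ^ 3"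
proof -
  define c where "c = y \<bullet> (hess p *v y)"
  define \<psi> where "\<psi> s = f (p + s *\<^sub>R y) - s\<^sup>2 / 2 * c" for s
  define \<psi>' where "\<psi>' s = grad (p + s *\<^sub>R y) \<bullet> y - s * c" for s
  define B where "B = \<alpha> * t\<^sup>2 * norm y ^ 3"
  have "\<bar>\<psi> t - \<psi> 0\<bar> \<le> B * t"
  proof (rule mvt_bound[OF t])
    fix s :: real
    have d1: "((\<lambda>s. f (p + s *\<^sub>R y)) has_real_derivative grad (p + s *\<^sub>R y) \<bullet> y) (at s)"
      by (rule line_deriv[OF grad])
    show "(\<psi> has_real_derivative \<psi>' s) (at s)"
      unfolding \<psi>_def \<psi>'_def
      by (intro DERIV_diff d1) (auto intro!: derivative_eq_intros)
  next
    fix s :: real assume s: "0 \<le> s" "s \<le> t"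
    have eq: "\<psi>' s = (grad (p + s *\<^sub>R y) - grad p - hess p *v ((p + s *\<^sub>R y) - p)) \<bullet> y"
      unfolding \<psi>'_def c_def using g0
      by (simp add: inner_diff_left inner_diff_right matrix_vector_mult_scaleR inner_commute)
    have n1: "norm (grad (p + s *\<^sub>R y) - grad p - hess p *v ((p + s *\<^sub>R y) - p)) \<le> \<alpha> * (s * norm y)\<^sup>2"
      using lin_bound[OF hess hess_lip a0, of "p + s *\<^sub>R y" p] s by simp
    have n2: "\<alpha> * (s * norm y)\<^sup>2 \<le> \<alpha> * (t * norm y)\<^sup>2"
      using s a0 by (intro mult_left_mono power_mono mult_right_mono) auto
    have "\<bar>\<psi>' s\<bar> \<le> norm (grad (p + s *\<^sub>R y) - grad p - hess p *v ((p + s *\<^sub>R y) - p)) * norm y"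
      unfolding eq by (rule Cauchy_Schwarz_ineq2)
    also have "\<dots> \<le> \<alpha> * (t * norm y)\<^sup>2 * norm y"
      using n1 n2 by (intro mult_right_mono) auto
    also have "\<dots> = B" by (simp add: B_def power2_eq_square power3_eq_cube algebra_simps)
    finally show "\<bar>\<psi>' s\<bar> \<le> B" .
  qed
  moreover have "\<psi> t - \<psi> 0 = f (p + t *\<^sub>R y) - f p - t\<^sup>2 / 2 * c" by (simp add: \<psi>_def)
  moreover have "B * t = \<alpha> * t^3 * norm y ^ 3"
    by (simp add: B_def power2_eq_square power3_eq_cube algebra_simps)
  ultimately show ?thesis unfolding c_def by linarith
qed

lemma hess_lower:
  fixes f :: "real^'d \<Rightarrow> real" and grad :: "real^'d \<Rightarrow> real^'d" and hess :: "real^'d \<Rightarrow> real^'d^'d"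
  assumes grad: "\<And>x. (f has_derivative (\<lambda>h. grad x \<bullet> h)) (at x)"
    and hess: "\<And>x. (grad has_derivative (\<lambda>h. hess x *v h)) (at x)"
    and hess_lip: "\<And>u v. onorm (\<lambda>h. (hess u - hess v) *v h) \<le> \<alpha> * norm (u - v)"
    and a0: "0 \<le> \<alpha>" and g0: "grad p = 0"
    and sconv: "strongly_convex \<mu> f"
  shows "\<mu> * (norm y)\<^sup>2 \<le> y \<bullet> (hess p *v y)"
proof -
  have "\<mu> * (norm y)\<^sup>2 \<le> y \<bullet> (hess p *v y) + 0"
  proof (rule eps_le)
    fix t :: real assume t: "0 < t"
    note sc = sconv[unfolded strongly_convex_def, rule_format, of "1/2" "p + t *\<^sub>R y" "p - t *\<^sub>R y"]
    have mid: "(1/2) *\<^sub>R (p + t *\<^sub>R y) + (1 - 1/2) *\<^sub>R (p - t *\<^sub>R y) = p"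
      by (simp add: algebra_simps scaleR_2[symmetric])
    have nd: "norm ((p + t *\<^sub>R y) - (p - t *\<^sub>R y)) = 2 * t * norm y"
    proof -
      have "(p + t *\<^sub>R y) - (p - t *\<^sub>R y) = t *\<^sub>R y + t *\<^sub>R y" by simp
      also have "\<dots> = (2 * t) *\<^sub>R y" by (metis mult_2 scaleR_left_distrib)
      finally have "(p + t *\<^sub>R y) - (p - t *\<^sub>R y) = (2 * t) *\<^sub>R y" .
      thus ?thesis using t by simp
    qed
    have s1: "f p \<le> (f (p + t *\<^sub>R y) + f (p - t *\<^sub>R y)) / 2 - \<mu> / 2 * t\<^sup>2 * (norm y)\<^sup>2"
      using sc unfolding mid nd by (simp add: power2_eq_square field_simps)
    note u1 = quad_upper[OF grad hess hess_lip a0 t g0, of y]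
    note u2 = quad_upper[OF grad hess hess_lip a0 t g0, of "- y"]
    have e2: "p + t *\<^sub>R (- y) = p - t *\<^sub>R y" by simp
    have e3: "(- y) \<bullet> (hess p *v (- y)) = y \<bullet> (hess p *v y)" using matrix_vector_mult_scaleR[of "hess p" "-1" y] by simp
    have "\<mu> * t\<^sup>2 * (norm y)\<^sup>2 \<le> t\<^sup>2 * (y \<bullet> (hess p *v y)) + t\<^sup>2 * (t * (2 * \<alpha> * norm y ^ 3))"
      using s1 u1 u2 unfolding e2 e3 norm_minus_cancel by (simp add: power3_eq_cube power2_eq_square algebra_simps)
    hence "t\<^sup>2 * (\<mu> * (norm y)\<^sup>2) \<le> t\<^sup>2 * (y \<bullet> (hess p *v y) + t * (2 * \<alpha> * norm y ^ 3))"
      by (simp add: algebra_simps)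
    hence "\<mu> * (norm y)\<^sup>2 \<le> y \<bullet> (hess p *v y) + t * (2 * \<alpha> * norm y ^ 3)"
      using t by (simp add: mult_le_cancel_left)
    thus "\<mu> * (norm y)\<^sup>2 \<le> (y \<bullet> (hess p *v y) + 0) + t * (2 * \<alpha> * norm y ^ 3)" by simp
  qed
  thus ?thesis by simp
qed

lemma hess_upper:
  fixes grad :: "real^'d \<Rightarrow> real^'d" and hess :: "real^'d \<Rightarrow> real^'d^'d"
  assumes hess: "\<And>x. (grad has_derivative (\<lambda>h. hess x *v h)) (at x)"
    and hess_lip: "\<And>u v. onorm (\<lambda>h. (hess u - hess v) *v h) \<le> \<alpha> * norm (u - v)"
    and smooth: "\<And>u v. norm (grad u - grad v) \<le> \<alpha> * norm (u - v)"
    and a0: "0 \<le> \<alpha>"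
  shows "norm (hess p *v y) \<le> \<alpha> * norm y"
proof -
  have "norm (hess p *v y) \<le> \<alpha> * norm y + 0"
  proof (rule eps_le)
    fix t :: real assume t: "0 < t"
    have e: "t *\<^sub>R (hess p *v y) = (grad (p + t *\<^sub>R y) - grad p) - (grad (p + t *\<^sub>R y) - grad p - hess p *v ((p + t *\<^sub>R y) - p))"
      by (simp add: matrix_vector_mult_scaleR)
    have n1: "norm (grad (p + t *\<^sub>R y) - grad p - hess p *v ((p + t *\<^sub>R y) - p)) \<le> \<alpha> * (t * norm y)\<^sup>2"
      using lin_bound[OF hess hess_lip a0, of "p + t *\<^sub>R y" p] t by simp
    have n2: "norm (grad (p + t *\<^sub>R y) - grad p) \<le> \<alpha> * (t * norm y)"
      using smooth[of "p + t *\<^sub>R y" p] t by simp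
    have "t * norm (hess p *v y) \<le> \<alpha> * (t * norm y) + \<alpha> * (t * norm y)\<^sup>2"
      using norm_triangle_ineq4[of "grad (p + t *\<^sub>R y) - grad p" "grad (p + t *\<^sub>R y) - grad p - hess p *v ((p + t *\<^sub>R y) - p)"]
        n1 n2 t arg_cong[OF e, of norm] by simp
    also have "\<dots> = t * (\<alpha> * norm y + t * (\<alpha> * (norm y)\<^sup>2))" by (simp add: power2_eq_square algebra_simps)
    finally have "norm (hess p *v y) \<le> \<alpha> * norm y + t * (\<alpha> * (norm y)\<^sup>2)"
      using t by (simp add: mult_le_cancel_left)
    thus "norm (hess p *v y) \<le> (\<alpha> * norm y + 0) + t * (\<alpha> * (norm y)\<^sup>2)" by simp
  qed
  thus ?thesis by simp
qed



locale lyap =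
  fixes Hm :: "'a::real_inner \<Rightarrow> 'a" and \<mu> \<alpha> \<eta> \<delta> :: real
  assumes sym: "\<And>u v. u \<bullet> Hm v = v \<bullet> Hm u"
    and low: "\<And>y. \<mu> * (norm y)\<^sup>2 \<le> y \<bullet> Hm y"
    and coco: "\<And>y. (norm (Hm y))\<^sup>2 \<le> \<alpha> * (y \<bullet> Hm y)"
    and eta_pos: "0 < \<eta>" and eta_a: "\<eta> * \<alpha> = 1" and eta_mu: "\<eta> * \<mu> = 4 * \<delta>\<^sup>2"
    and d_pos: "0 < \<delta>" and d_le: "\<delta> \<le> 1/2"
begin

definition "\<beta> = (1 - \<delta>)\<^sup>2"
definition "aop y = (1 + \<beta>) *\<^sub>R y - \<eta> *\<^sub>R Hm y"
definition "V x y = (norm x)\<^sup>2 - x \<bullet> aop y + \<beta> * (norm y)\<^sup>2"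

lemma aop_sym: "u \<bullet> aop v = v \<bullet> aop u"
  unfolding aop_def by (simp add: inner_diff_right inner_commute sym)

lemma beta_pos: "0 < \<beta>" and beta_le: "\<beta> \<le> 1"
  using d_pos d_le unfolding \<beta>_def by (auto simp: power2_eq_square intro: mult_le_one)

lemma V1: "V (aop x - \<beta> *\<^sub>R y) x = \<beta> * V x y"
proof -
  have "V (aop x - \<beta> *\<^sub>R y) x = (aop x - \<beta> *\<^sub>R y) \<bullet> (aop x - \<beta> *\<^sub>R y) - (aop x - \<beta> *\<^sub>R y) \<bullet> aop x + \<beta> * (x \<bullet> x)"
    unfolding V_def by (simp add: power2_norm_eq_inner)
  also have "\<dots> = \<beta> * (x \<bullet> x) - \<beta> * (y \<bullet> aop x) + \<beta> * \<beta> * (y \<bullet> y)"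
    by (simp add: inner_diff_left inner_diff_right inner_commute algebra_simps)
  also have "\<dots> = \<beta> * V x y"
    unfolding V_def using aop_sym[of x y] by (simp add: power2_norm_eq_inner algebra_simps)
  finally show ?thesis .
qed

lemma q_nonneg: "0 \<le> y \<bullet> Hm y"
  using low[of y] eta_mu eta_pos
proof -
  have "0 \<le> \<mu>" using eta_mu eta_pos d_pos
    by (metis zero_le_power2 zero_le_mult_iff mult_nonneg_nonneg zero_le_numeral less_le_not_le)
  thus ?thesis using low[of y] by (meson order_trans zero_le_mult_iff zero_le_power2)
qed

lemma a_bound: "(norm (aop y))\<^sup>2 \<le> ((1 + \<beta>)\<^sup>2 - (1 + 2 * \<beta>) * (4 * \<delta>\<^sup>2)) * (norm y)\<^sup>2"
proof -
  let ?q = "y \<bullet> Hm y"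
  have e: "(norm (aop y))\<^sup>2 = (1 + \<beta>)\<^sup>2 * (norm y)\<^sup>2 - 2 * (1 + \<beta>) * \<eta> * ?q + \<eta>\<^sup>2 * (norm (Hm y))\<^sup>2"
    unfolding aop_def power2_norm_eq_inner
    by (simp add: inner_diff_left inner_diff_right inner_commute power2_eq_square algebra_simps)
  have c: "\<eta>\<^sup>2 * (norm (Hm y))\<^sup>2 \<le> \<eta> * ?q"
  proof -
    have "\<eta>\<^sup>2 * (norm (Hm y))\<^sup>2 \<le> \<eta>\<^sup>2 * (\<alpha> * ?q)" using coco[of y] by (intro mult_left_mono) auto
    also have "\<dots> = \<eta> * ?q" using eta_a by (simp add: power2_eq_square algebra_simps)
    finally show ?thesis .
  qed
  have l: "(1 + 2 * \<beta>) * (4 * \<delta>\<^sup>2) * (norm y)\<^sup>2 \<le> (1 + 2 * \<beta>) * \<eta> * ?q"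
  proof -
    have "(1 + 2 * \<beta>) * (4 * \<delta>\<^sup>2) * (norm y)\<^sup>2 = (1 + 2 * \<beta>) * (\<eta> * \<mu>) * (norm y)\<^sup>2"
      using eta_mu by simp
    also have "\<dots> = (1 + 2 * \<beta>) * \<eta> * (\<mu> * (norm y)\<^sup>2)" by (simp add: mult_ac)
    also have "\<dots> \<le> (1 + 2 * \<beta>) * \<eta> * ?q"
      using low[of y] beta_pos eta_pos by (intro mult_left_mono) auto
    finally show ?thesis .
  qed
  show ?thesis using e c l by (simp add: algebra_simps)
qed

lemma a_bound2: "norm (aop y) \<le> 2 * norm y"
proof -
  have "(norm (aop y))\<^sup>2 \<le> ((1 + \<beta>)\<^sup>2 - (1 + 2 * \<beta>) * (4 * \<delta>\<^sup>2)) * (norm y)\<^sup>2" by (rule a_bound)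
  also have "\<dots> \<le> (2 * norm y)\<^sup>2"
  proof -
    have "(1 + \<beta>)\<^sup>2 - (1 + 2 * \<beta>) * (4 * \<delta>\<^sup>2) \<le> 4"
    proof -
      have "(1 + \<beta>)\<^sup>2 \<le> 2\<^sup>2" using beta_pos beta_le by (intro power_mono) auto
      hence "(1 + \<beta>)\<^sup>2 \<le> 4" by simp
      moreover have "0 \<le> (1 + 2 * \<beta>) * (4 * \<delta>\<^sup>2)" using beta_pos by (intro mult_nonneg_nonneg) auto
      ultimately show ?thesis by linarith
    qed
    thus ?thesis by (simp add: power_mult_distrib mult_right_mono)
  qed
  finally show ?thesis by (rule power2_le_imp_le) simp
qed

lemma key: "\<beta> * (norm y)\<^sup>2 - (norm (aop y))\<^sup>2 / 4 \<ge> 3/4 * \<delta>\<^sup>2 * (norm y)\<^sup>2"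
proof -
  have poly: "4 * \<beta> - ((1 + \<beta>)\<^sup>2 - (1 + 2 * \<beta>) * (4 * \<delta>\<^sup>2)) = \<delta>\<^sup>2 * (8 - 12 * \<delta> + 7 * \<delta>\<^sup>2)"
    unfolding \<beta>_def by (simp add: power2_eq_square algebra_simps)
  have p3: "8 - 12 * \<delta> + 7 * \<delta>\<^sup>2 \<ge> 3"
  proof -
    have "0 \<le> (1 - \<delta>) * (5 - 7 * \<delta>)" using d_le by (intro mult_nonneg_nonneg) auto
    thus ?thesis by (simp add: power2_eq_square algebra_simps)
  qed
  have h: "3/4 * \<delta>\<^sup>2 \<le> (\<delta>\<^sup>2 * (8 - 12 * \<delta> + 7 * \<delta>\<^sup>2)) / 4"
    using mult_left_mono[OF p3, of "\<delta>\<^sup>2"] by simp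
  have "3/4 * \<delta>\<^sup>2 * (norm y)\<^sup>2 \<le> (\<delta>\<^sup>2 * (8 - 12 * \<delta> + 7 * \<delta>\<^sup>2)) / 4 * (norm y)\<^sup>2"
    using h by (intro mult_right_mono) auto
  also have "\<dots> = (4 * \<beta> - ((1 + \<beta>)\<^sup>2 - (1 + 2 * \<beta>) * (4 * \<delta>\<^sup>2))) / 4 * (norm y)\<^sup>2"
    by (simp add: poly)
  also have "\<dots> \<le> \<beta> * (norm y)\<^sup>2 - (norm (aop y))\<^sup>2 / 4"
    using a_bound[of y] by (simp add: field_simps)
  finally show ?thesis .
qed

lemma V2: "V x y = (norm (x - (1/2) *\<^sub>R aop y))\<^sup>2 + (\<beta> * (norm y)\<^sup>2 - (norm (aop y))\<^sup>2 / 4)"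
  unfolding V_def power2_norm_eq_inner
  by (simp add: inner_diff_left inner_diff_right inner_commute algebra_simps)

lemma sq_sum_le: "((a::real) + b)\<^sup>2 \<le> 2 * a\<^sup>2 + 2 * b\<^sup>2"
proof -
  have "0 \<le> (a - b)\<^sup>2" by simp
  thus ?thesis by (simp add: power2_eq_square algebra_simps)
qed

lemma V3: "\<delta>\<^sup>2 / 4 * ((norm x)\<^sup>2 + (norm y)\<^sup>2) \<le> V x y"
proof -
  let ?U = "(norm (x - (1/2) *\<^sub>R aop y))\<^sup>2"
  have x: "(norm x)\<^sup>2 \<le> 2 * ?U + 2 * (norm y)\<^sup>2"
  proof -
    have "norm x \<le> norm (x - (1/2) *\<^sub>R aop y) + norm ((1/2) *\<^sub>R aop y)"
      by (metis norm_triangle_ineq diff_add_cancel)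
    also have "norm ((1/2) *\<^sub>R aop y) \<le> norm y" using a_bound2[of y] by simp
    finally have "norm x \<le> norm (x - (1/2) *\<^sub>R aop y) + norm y" by simp
    hence "(norm x)\<^sup>2 \<le> (norm (x - (1/2) *\<^sub>R aop y) + norm y)\<^sup>2" by (intro power_mono) auto
    also have "\<dots> \<le> 2 * ?U + 2 * (norm y)\<^sup>2" by (rule sq_sum_le)
    finally show ?thesis .
  qed
  have v: "?U + 3/4 * \<delta>\<^sup>2 * (norm y)\<^sup>2 \<le> V x y" using V2[of x y] key[of y] by linarith
  have "\<delta> * \<delta> \<le> (1/2) * (1/2)" using d_pos d_le by (intro mult_mono) auto
  hence d2: "\<delta>\<^sup>2 \<le> 1/4" by (simp add: power2_eq_square)
  have "\<delta>\<^sup>2 / 4 * ((norm x)\<^sup>2 + (norm y)\<^sup>2) \<le> \<delta>\<^sup>2 / 4 * (2 * ?U + 3 * (norm y)\<^sup>2)"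
    using x by (intro mult_left_mono) auto
  also have "\<dots> = \<delta>\<^sup>2 / 2 * ?U + 3/4 * \<delta>\<^sup>2 * (norm y)\<^sup>2" by (simp add: algebra_simps)
  also have "\<delta>\<^sup>2 / 2 * ?U \<le> ?U" using d2 by (intro mult_left_le_one_le) auto
  finally show ?thesis using v by linarith
qed

lemma V_nonneg: "0 \<le> V x y"
  by (rule order_trans[OF _ V3]) (simp add: d_pos)

lemma V4: "V x y \<le> 2 * ((norm x)\<^sup>2 + (norm y)\<^sup>2)"
proof -
  have "- (x \<bullet> aop y) \<le> norm x * norm (aop y)"
    using Cauchy_Schwarz_ineq2[of x "aop y"] by linarith
  also have "\<dots> \<le> norm x * (2 * norm y)" by (intro mult_left_mono a_bound2) auto
  finally have a: "- (x \<bullet> aop y) \<le> 2 * norm x * norm y" by simp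
  have b: "\<beta> * (norm y)\<^sup>2 \<le> (norm y)\<^sup>2" using beta_le by (intro mult_left_le_one_le) (auto simp: less_imp_le beta_pos)
  have c: "2 * norm x * norm y \<le> (norm x)\<^sup>2 + (norm y)\<^sup>2"
  proof -
    have "0 \<le> (norm x - norm y)\<^sup>2" by simp
    thus ?thesis by (simp add: power2_eq_square algebra_simps)
  qed
  have "V x y = (norm x)\<^sup>2 + (- (x \<bullet> aop y)) + \<beta> * (norm y)\<^sup>2" unfolding V_def by simp
  thus ?thesis using a b c by argo
qed

lemma V5: "sqrt (V (x + u) y) \<le> sqrt (V x y) + norm u"
proof -
  let ?z = "x - (1/2) *\<^sub>R aop y"
  have h1: "(norm (x + u))\<^sup>2 = (norm x)\<^sup>2 + 2 * (u \<bullet> x) + (norm u)\<^sup>2"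
    unfolding power2_norm_eq_inner by (simp add: inner_add_left inner_add_right inner_commute[of x u])
  have h2: "(x + u) \<bullet> aop y = x \<bullet> aop y + u \<bullet> aop y" by (simp add: inner_add_left)
  have h3: "u \<bullet> ?z = u \<bullet> x - (1/2) * (u \<bullet> aop y)" by (simp add: inner_diff_right)
  have e: "V (x + u) y = V x y + 2 * (u \<bullet> ?z) + (norm u)\<^sup>2"
    unfolding V_def h1 h2 h3 by argo
  have k0: "0 \<le> 3/4 * \<delta>\<^sup>2 * (norm y)\<^sup>2" by simp
  have U: "(norm ?z)\<^sup>2 \<le> V x y" using V2[of x y] key[of y] k0 by linarith
  have nz: "norm ?z \<le> sqrt (V x y)" using U by (simp add: real_le_rsqrt)
  have "u \<bullet> ?z \<le> norm u * norm ?z"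
    by (rule order_trans[OF abs_ge_self Cauchy_Schwarz_ineq2])
  also have "\<dots> \<le> norm u * sqrt (V x y)" using nz by (intro mult_left_mono) auto
  finally have uz: "u \<bullet> ?z \<le> norm u * sqrt (V x y)" .
  have sq: "(sqrt (V x y) + norm u)\<^sup>2 = V x y + 2 * (norm u * sqrt (V x y)) + (norm u)\<^sup>2"
    using V_nonneg[of x y] by (simp add: power2_sum mult_ac)
  have "V (x + u) y \<le> (sqrt (V x y) + norm u)\<^sup>2"
    unfolding sq e using uz by linarith
  thus ?thesis by (simp add: real_sqrt_le_iff real_le_lsqrt V_nonneg)
qed

end


theorem theorem8:
  fixes f :: "real^'d \<Rightarrow> real"
    and grad :: "real^'d \<Rightarrow> real^'d"
    and hess :: "real^'d \<Rightarrow> real^'d^'d"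
    and \<mu> \<alpha> :: real
    and wstar :: "real^'d"
    and w :: "int \<Rightarrow> real^'d"
  assumes grad: "\<And>x. (f has_derivative (\<lambda>h. grad x \<bullet> h)) (at x)"
    and hess: "\<And>x. (grad has_derivative (\<lambda>h. hess x *v h)) (at x)"
    and mu_pos: "0 < \<mu>" and mu_le: "\<mu> \<le> \<alpha>"
    and sconv: "strongly_convex \<mu> f"
    and smooth: "\<And>u v. norm (grad u - grad v) \<le> \<alpha> * norm (u - v)"
    and hess_lip: "\<And>u v. onorm (\<lambda>h. (hess u - hess v) *v h) \<le> \<alpha> * norm (u - v)"
    and wstar_min: "\<And>x. f wstar \<le> f x"
    and hb: "\<And>t::int. t \<ge> 0 \<Longrightarrow>
       w (t + 1) = w t - (1 / \<alpha>) *\<^sub>R grad (w t)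
                   + ((1 - 1 / (2 * sqrt (\<alpha> / \<mu>)))\<^sup>2) *\<^sub>R (w t - w (t - 1))"
    and init: "stack_norm (w 0 - wstar) (w (-1) - wstar) \<le> 1 / (683 * (\<alpha> / \<mu>) powr (3/2))"
  shows "\<forall>t::nat. stack_norm (w (int t + 1) - wstar) (w (int t) - wstar)
           \<le> (1 - 1 / (4 * sqrt (\<alpha> / \<mu>))) ^ (t + 1) * (8 * sqrt (\<alpha> / \<mu>))
              * stack_norm (w 0 - wstar) (w (-1) - wstar)"
proof -
  have a_pos: "0 < \<alpha>" using mu_pos mu_le by linarith
  hence a0: "0 \<le> \<alpha>" by simp
  have g0: "grad wstar = 0"
  proof -
    have "(\<lambda>h. grad wstar \<bullet> h) = (\<lambda>v. 0)"
      by (rule differential_zero_maxmin[of wstar UNIV f]) (auto intro: grad wstar_min)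
    hence "grad wstar \<bullet> grad wstar = 0" by (metis)
    thus ?thesis by simp
  qed
  define Hm where "Hm v = hess wstar *v v" for v
  have sym: "\<And>u v. u \<bullet> Hm v = v \<bullet> Hm u"
    unfolding Hm_def by (rule hess_sym[OF grad hess hess_lip a0])
  have low: "\<And>y. \<mu> * (norm y)\<^sup>2 \<le> y \<bullet> Hm y"
    unfolding Hm_def by (rule hess_lower[OF grad hess hess_lip a0 g0 sconv])
  have up: "\<And>y. norm (Hm y) \<le> \<alpha> * norm y"
    unfolding Hm_def by (rule hess_upper[OF hess hess_lip smooth a0])
  have coco: "\<And>y. (norm (Hm y))\<^sup>2 \<le> \<alpha> * (y \<bullet> Hm y)"
  proof -
    fix y
    let ?z = "Hm y" and ?s = "1 / \<alpha>"
    have lin: "Hm (y - ?s *\<^sub>R ?z) = Hm y - ?s *\<^sub>R Hm ?z"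
      unfolding Hm_def by (simp add: matrix_vector_mult_diff_distrib matrix_vector_mult_scaleR)
    have "0 \<le> \<mu> * (norm (y - ?s *\<^sub>R ?z))\<^sup>2" using mu_pos by simp
    also have "\<dots> \<le> (y - ?s *\<^sub>R ?z) \<bullet> Hm (y - ?s *\<^sub>R ?z)" by (rule low)
    also have "\<dots> = y \<bullet> Hm y - 2 * ?s * (?z \<bullet> ?z) + ?s * ?s * (?z \<bullet> Hm ?z)"
      unfolding lin using sym[of y ?z]
      by (simp add: inner_diff_left inner_diff_right inner_commute algebra_simps)
    finally have A: "0 \<le> y \<bullet> Hm y - 2 * ?s * (?z \<bullet> ?z) + ?s * ?s * (?z \<bullet> Hm ?z)" .
    have "?z \<bullet> Hm ?z \<le> norm ?z * norm (Hm ?z)" by (rule order_trans[OF abs_ge_self Cauchy_Schwarz_ineq2])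
    also have "\<dots> \<le> norm ?z * (\<alpha> * norm ?z)" by (intro mult_left_mono up) auto
    finally have B: "?z \<bullet> Hm ?z \<le> \<alpha> * (?z \<bullet> ?z)" by (simp add: power2_norm_eq_inner[symmetric] power2_eq_square mult_ac)
    have "?s * ?s * (?z \<bullet> Hm ?z) \<le> ?s * ?s * (\<alpha> * (?z \<bullet> ?z))" using B by (intro mult_left_mono) auto
    also have "\<dots> = ?s * (?z \<bullet> ?z)" using a_pos by (simp add: field_simps)
    finally have "0 \<le> y \<bullet> Hm y - ?s * (?z \<bullet> ?z)" using A by linarith
    hence "?s * (?z \<bullet> ?z) \<le> y \<bullet> Hm y" by simp
    hence "\<alpha> * (?s * (?z \<bullet> ?z)) \<le> \<alpha> * (y \<bullet> Hm y)" using a0 by (rule mult_left_mono)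
    thus "(norm (Hm y))\<^sup>2 \<le> \<alpha> * (y \<bullet> Hm y)" using a_pos by (simp add: power2_norm_eq_inner)
  qed
  define \<kappa> where "\<kappa> = \<alpha> / \<mu>"
  define sk where "sk = sqrt \<kappa>"
  define \<delta> where "\<delta> = 1 / (2 * sk)"
  define \<eta> where "\<eta> = 1 / \<alpha>"
  have k1: "1 \<le> \<kappa>" using mu_pos mu_le by (simp add: \<kappa>_def)
  have sk1: "1 \<le> sk" using k1 by (simp add: sk_def)
  have sk2: "sk\<^sup>2 = \<kappa>" using k1 by (simp add: sk_def)
  have d_pos: "0 < \<delta>" using sk1 by (simp add: \<delta>_def)
  have d_le: "\<delta> \<le> 1/2" using sk1 by (simp add: \<delta>_def field_simps)
  have eta_pos: "0 < \<eta>" using a_pos by (simp add: \<eta>_def)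
  have eta_a: "\<eta> * \<alpha> = 1" using a_pos by (simp add: \<eta>_def)
  have eta_mu: "\<eta> * \<mu> = 4 * \<delta>\<^sup>2"
    using sk2 mu_pos a_pos sk1 by (simp add: \<eta>_def \<delta>_def \<kappa>_def power2_eq_square field_simps)
  interpret L: lyap Hm \<mu> \<alpha> \<eta> \<delta>
    by unfold_locales (use sym low coco eta_pos eta_a eta_mu d_pos d_le in auto)
  have beta_eq: "L.\<beta> = (1 - 1 / (2 * sqrt (\<alpha> / \<mu>)))\<^sup>2"
    unfolding L.\<beta>_def by (simp add: \<delta>_def sk_def \<kappa>_def)
  define X where "X n = w (int n) - wstar" for n
  define Y where "Y n = w (int n - 1) - wstar" for n
  define u where "u n = - \<eta> *\<^sub>R (grad (w (int n)) - Hm (X n))" for n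
  have recX: "X (Suc n) = L.aop (X n) - L.\<beta> *\<^sub>R Y n + u n" for n
  proof -
    have hbn: "w (int n + 1) = w (int n) - (1 / \<alpha>) *\<^sub>R grad (w (int n))
                   + L.\<beta> *\<^sub>R (w (int n) - w (int n - 1))"
      using hb[of "int n"] beta_eq by simp
    have aux: "L.aop (X n) - L.\<beta> *\<^sub>R Y n + u n = (1 + L.\<beta>) *\<^sub>R X n - L.\<beta> *\<^sub>R Y n - \<eta> *\<^sub>R grad (w (int n))"
      unfolding L.aop_def u_def by (simp add: algebra_simps)
    have "X (Suc n) = w (int n + 1) - wstar" by (simp add: X_def add.commute)
    also have "\<dots> = (w (int n) - (1 / \<alpha>) *\<^sub>R grad (w (int n))
                   + L.\<beta> *\<^sub>R (w (int n) - w (int n - 1))) - wstar" using hbn by simp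
    also have "\<dots> = (1 + L.\<beta>) *\<^sub>R X n - L.\<beta> *\<^sub>R Y n - \<eta> *\<^sub>R grad (w (int n))"
      unfolding X_def Y_def \<eta>_def by (simp add: algebra_simps)
    finally show ?thesis using aux by simp
  qed
  have recY: "Y (Suc n) = X n" for n by (simp add: X_def Y_def)
  have ubound: "norm (u n) \<le> (norm (X n))\<^sup>2" for n
  proof -
    have "norm (grad (w (int n)) - Hm (X n)) = norm (grad (w (int n)) - grad wstar - hess wstar *v (w (int n) - wstar))"
      using g0 by (simp add: Hm_def X_def)
    also have "\<dots> \<le> \<alpha> * (norm (X n))\<^sup>2"
      unfolding X_def by (rule lin_bound[OF hess hess_lip a0])
    finally have "\<eta> * norm (grad (w (int n)) - Hm (X n)) \<le> \<eta> * (\<alpha> * (norm (X n))\<^sup>2)"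
      using eta_pos by (intro mult_left_mono) auto
    thus ?thesis using eta_a eta_pos by (simp add: u_def mult.assoc[symmetric])
  qed
  define N where "N n = sqrt (L.V (X n) (Y n))" for n
  have sqb: "sqrt L.\<beta> = 1 - \<delta>" using d_le by (simp add: L.\<beta>_def)
  have step: "N (Suc n) \<le> (1 - \<delta>) * N n + (norm (X n))\<^sup>2" for n
  proof -
    have "N (Suc n) = sqrt (L.V (L.aop (X n) - L.\<beta> *\<^sub>R Y n + u n) (X n))"
      by (simp add: N_def recX recY)
    also have "\<dots> \<le> sqrt (L.V (L.aop (X n) - L.\<beta> *\<^sub>R Y n) (X n)) + norm (u n)" by (rule L.V5)
    also have "sqrt (L.V (L.aop (X n) - L.\<beta> *\<^sub>R Y n) (X n)) = (1 - \<delta>) * N n"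
      by (simp add: L.V1 N_def real_sqrt_mult sqb)
    finally show ?thesis using ubound[of n] by linarith
  qed
  have XN: "(norm (X n))\<^sup>2 + (norm (Y n))\<^sup>2 \<le> 4 / \<delta>\<^sup>2 * (N n)\<^sup>2" for n
  proof -
    have "(N n)\<^sup>2 = L.V (X n) (Y n)" by (simp add: N_def L.V_nonneg)
    moreover have "\<delta>\<^sup>2 / 4 * ((norm (X n))\<^sup>2 + (norm (Y n))\<^sup>2) \<le> L.V (X n) (Y n)" by (rule L.V3)
    ultimately show ?thesis using d_pos by (simp add: field_simps)
  qed
  define S0 where "S0 = stack_norm (w 0 - wstar) (w (-1) - wstar)"
  have S0e: "S0 = sqrt ((norm (X 0))\<^sup>2 + (norm (Y 0))\<^sup>2)" by (simp add: S0_def stack_norm_def X_def Y_def)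
  have S0_nn: "0 \<le> S0" by (simp add: S0e)
  have N0: "N 0 \<le> sqrt 2 * S0"
  proof -
    have "N 0 \<le> sqrt (2 * ((norm (X 0))\<^sup>2 + (norm (Y 0))\<^sup>2))" unfolding N_def using L.V4 by simp
    also have "\<dots> = sqrt 2 * S0" unfolding S0e by (rule real_sqrt_mult)
    finally show ?thesis .
  qed
  have pw: "\<kappa> powr (3/2) = sk ^ 3"
  proof -
    have "\<kappa> powr (3/2) = \<kappa> powr 1 * \<kappa> powr (1/2)" using powr_add[of \<kappa> 1 "1/2"] by simp
    also have "\<dots> = \<kappa> * sqrt \<kappa>" using k1 by (simp add: powr_half_sqrt)
    also have "\<dots> = sk ^ 3" using sk2 by (simp add: sk_def power3_eq_cube power2_eq_square)
    finally show ?thesis .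
  qed
  have s2: "sqrt 2 \<le> (3/2::real)" by (rule real_le_lsqrt) (auto simp: power2_eq_square)
  have Nsmall: "4 / \<delta>\<^sup>2 * N 0 \<le> \<delta> / 2"
  proof -
    have "S0 \<le> 1 / (683 * sk ^ 3)" using init pw by (simp add: S0_def \<kappa>_def)
    hence i1: "3/2 * S0 \<le> 3/2 * (1 / (683 * sk ^ 3))" by simp
    have "sqrt 2 * S0 \<le> 3/2 * S0" using s2 S0_nn by (rule mult_right_mono)
    hence "N 0 \<le> 3/2 * (1 / (683 * sk ^ 3))" using N0 i1 by linarith
    also have "\<dots> \<le> \<delta>^3 / 8" using sk1 by (simp add: \<delta>_def field_simps)
    finally have "N 0 \<le> \<delta>^3 / 8" .
    thus ?thesis using d_pos by (simp add: field_simps power2_eq_square power3_eq_cube)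
  qed
  define \<theta> where "\<theta> = 1 - \<delta> / 2"
  have th0: "0 \<le> \<theta>" "\<theta> \<le> 1" using d_pos d_le by (auto simp: \<theta>_def)
  have N_nn: "0 \<le> N n" for n by (simp add: N_def L.V_nonneg)
  have ind: "N n \<le> \<theta> ^ n * N 0" for n
  proof (induction n)
    case 0 then show ?case by simp
  next
    case (Suc n)
    have "\<theta> ^ n * N 0 \<le> N 0" using th0 N_nn[of 0] by (simp add: mult_left_le_one_le power_le_one)
    hence Nn: "N n \<le> N 0" using Suc by linarith
    have "(norm (X n))\<^sup>2 \<le> 4 / \<delta>\<^sup>2 * (N n)\<^sup>2" using XN[of n] zero_le_power2[of "norm (Y n)"] by linarith
    also have "\<dots> = N n * (4 / \<delta>\<^sup>2 * N n)" by (simp add: power2_eq_square)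
    also have "\<dots> \<le> N n * (\<delta> / 2)"
    proof -
      have "4 / \<delta>\<^sup>2 * N n \<le> 4 / \<delta>\<^sup>2 * N 0" using Nn by (intro mult_left_mono) auto
      hence "4 / \<delta>\<^sup>2 * N n \<le> \<delta> / 2" using Nsmall by linarith
      thus ?thesis using N_nn[of n] by (intro mult_left_mono)
    qed
    finally have "N (Suc n) \<le> (1 - \<delta>) * N n + N n * (\<delta> / 2)" using step[of n] by linarith
    also have "\<dots> = \<theta> * N n" by (simp add: \<theta>_def algebra_simps)
    also have "\<dots> \<le> \<theta> * (\<theta> ^ n * N 0)" using Suc th0 by (intro mult_left_mono) auto
    finally show ?case by simp
  qed
  show ?thesis
  proof
    fix t :: nat
    have e: "stack_norm (w (int t + 1) - wstar) (w (int t) - wstar) = sqrt ((norm (X (Suc t)))\<^sup>2 + (norm (Y (Suc t)))\<^sup>2)"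
      by (simp add: stack_norm_def X_def Y_def add.commute)
    also have "\<dots> \<le> sqrt (4 / \<delta>\<^sup>2 * (N (Suc t))\<^sup>2)" using XN by simp
    also have "\<dots> = 2 / \<delta> * N (Suc t)" using d_pos N_nn
      by (simp add: real_sqrt_mult real_sqrt_divide)
    also have "\<dots> \<le> 2 / \<delta> * (\<theta> ^ Suc t * (sqrt 2 * S0))"
    proof -
      have "\<theta> ^ Suc t * N 0 \<le> \<theta> ^ Suc t * (sqrt 2 * S0)" using N0 th0 by (intro mult_left_mono) auto
      hence "N (Suc t) \<le> \<theta> ^ Suc t * (sqrt 2 * S0)" using ind[of "Suc t"] by linarith
      thus ?thesis using d_pos by (intro mult_left_mono) auto
    qed
    also have "\<dots> \<le> 2 / \<delta> * (\<theta> ^ Suc t * (2 * S0))"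
    proof -
      have "sqrt 2 * S0 \<le> 2 * S0" using s2 S0_nn by (intro mult_right_mono) auto
      thus ?thesis using d_pos th0 by (intro mult_left_mono) auto
    qed
    also have "\<dots> = \<theta> ^ (t + 1) * (8 * sk) * S0" by (simp add: \<delta>_def)
    finally show "stack_norm (w (int t + 1) - wstar) (w (int t) - wstar)
           \<le> (1 - 1 / (4 * sqrt (\<alpha> / \<mu>))) ^ (t + 1) * (8 * sqrt (\<alpha> / \<mu>))
              * stack_norm (w 0 - wstar) (w (-1) - wstar)"
      by (simp add: \<theta>_def \<delta>_def sk_def \<kappa>_def S0_def)
  qed
qed

end
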